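(* There exists a universal constant $C>0$ such that the following holds. Let $\mathbf{u}=(u^1,\dots,u^m)$ be a viscosity solution to $\Delta\mathbf{u}=|\mathbf{u}|^{p-2}\mathbf{u}$ in $B_1$ such that, for some $\varepsilon>0$ (small), $$|u^i|\le\varepsilon^{3/4}\ \text{in } B_1,\ i=2,\dots,m,\qquad |\mathbf{u}|\equiv0\ \text{in } B_1\cap\{x_n<-\varepsilon\}.$$ Then $$|u^i|\le C\varepsilon^{3/4}(x_n+\varepsilon)^+\ \text{in } B_{1/2},\quad i=2,\dots,m.$$
   Context: Fix integers $n\ge 2$, $m\ge 1$ and $0<p<1$; universal means depending only on $n,m,p$. $t^+=\max\{t,0\}$. For $\mathbf{u}\in C(\Omega;\mathbb{R}^m)$, $\Omega(\mathbf{u}):=\Omega\cap\{|\mathbf{u}|>0\}$, $\Gamma(\mathbf{u}):=\Omega\cap\partial\Omega(\mathbf{u})$. Viscosity solution: $\mathbf{u}\in C(\Omega;\mathbb{R}^m)$ is a viscosity solution of $\Delta\mathbf{u}=|\mathbf{u}|^{p-2}\mathbf{u}$ in $\Omega$ if (i) $\Delta u^i=|\mathbf{u}|^{p-2}u^i$ in $\Omega(\mathbf{u})$ for all $i$, and (ii) for every $x_0\in\Gamma(\mathbf{u})$ and every $f\in\mathbb{R}^m$, $\langle\mathbf{u},f\rangle$ cannot be touched from below at $x_0$ by a function $\varphi\in C^1$ with $\varphi(x_0)=0$, $|\nabla\varphi(x_0)|\ne0$, such that on $\{\varphi\ne0\}$, $\varphi\in C^2$ and $\Delta\varphi>\varphi^{p-1}\chi_{\{\varphi>0\}}$.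 *)

theory Defs
  imports "HOL-Analysis.Analysis"
begin

definition pderiv :: "'n::finite \<Rightarrow> (real^'n \<Rightarrow> real) \<Rightarrow> real^'n \<Rightarrow> real" where
  "pderiv j f x = frechet_derivative f (at x) (axis j 1)"

definition C1_on :: "(real^'n::finite) set \<Rightarrow> (real^'n \<Rightarrow> real) \<Rightarrow> bool" where
  "C1_on S f \<longleftrightarrow> (\<forall>x\<in>S. f differentiable (at x)) \<and> (\<forall>j. continuous_on S (pderiv j f))"

definition C2_on :: "(real^'n::finite) set \<Rightarrow> (real^'n \<Rightarrow> real) \<Rightarrow> bool" where
  "C2_on S f \<longleftrightarrow> C1_on S f \<and> (\<forall>j. C1_on S (pderiv j f))"

definition laplacian :: "(real^'n::finite \<Rightarrow> real) \<Rightarrow> real^'n \<Rightarrow> real" where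
  "laplacian f x = (\<Sum>j\<in>UNIV. pderiv j (pderiv j f) x)"

definition pos_set :: "(real^'n::finite) set \<Rightarrow> (real^'n \<Rightarrow> real^'m::finite) \<Rightarrow> (real^'n) set" where
  "pos_set \<Omega> u = {x\<in>\<Omega>. norm (u x) > 0}"

definition free_bd :: "(real^'n::finite) set \<Rightarrow> (real^'n \<Rightarrow> real^'m::finite) \<Rightarrow> (real^'n) set" where
  "free_bd \<Omega> u = \<Omega> \<inter> frontier (pos_set \<Omega> u)"

definition touches_below :: "(real^'n::finite) set \<Rightarrow> (real^'n \<Rightarrow> real) \<Rightarrow> (real^'n \<Rightarrow> real) \<Rightarrow> real^'n \<Rightarrow> bool" where
  "touches_below U \<phi> g x0 \<longleftrightarrow> open U \<and> x0 \<in> U \<and> \<phi> x0 = g x0 \<and> (\<forall>x\<in>U. \<phi> x \<le> g x)"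

definition admissible_test :: "real \<Rightarrow> (real^'n::finite) set \<Rightarrow> (real^'n \<Rightarrow> real) \<Rightarrow> real^'n \<Rightarrow> bool" where
  "admissible_test p U \<phi> x0 \<longleftrightarrow>
     C1_on U \<phi> \<and> \<phi> x0 = 0 \<and> (\<exists>j. pderiv j \<phi> x0 \<noteq> 0) \<and>
     C2_on {x\<in>U. \<phi> x \<noteq> 0} \<phi> \<and>
     (\<forall>x\<in>U. \<phi> x \<noteq> 0 \<longrightarrow> laplacian \<phi> x > (if \<phi> x > 0 then \<phi> x powr (p - 1) else 0))"

definition viscosity_solution :: "real \<Rightarrow> (real^'n::finite) set \<Rightarrow> (real^'n \<Rightarrow> real^'m::finite) \<Rightarrow> bool" where
  "viscosity_solution p \<Omega> u \<longleftrightarrow>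
     continuous_on \<Omega> u \<and>
     (\<forall>i. C2_on (pos_set \<Omega> u) (\<lambda>x. u x $ i) \<and>
          (\<forall>x\<in>pos_set \<Omega> u. laplacian (\<lambda>y. u y $ i) x = norm (u x) powr (p - 2) * u x $ i)) \<and>
     (\<forall>x0\<in>free_bd \<Omega> u. \<forall>f::real^'m. \<not> (\<exists>U \<phi>. U \<subseteq> \<Omega> \<and>
         touches_below U \<phi> (\<lambda>x. u x \<bullet> f) x0 \<and> admissible_test p U \<phi> x0))"

end

theory Submission
  imports Defs
begin

lemma max_2nd:
  fixes \<phi> \<phi>' :: "real \<Rightarrow> real"
  assumes d0: "\<delta> > 0" and mx: "\<And>\<tau>. \<bar>\<tau>\<bar> < \<delta> \<Longrightarrow> \<phi> \<tau> \<le> \<phi> 0"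
    and der: "\<And>\<tau>. \<bar>\<tau>\<bar> < \<delta> \<Longrightarrow> (\<phi> has_real_derivative \<phi>' \<tau>) (at \<tau>)"
    and der2: "(\<phi>' has_real_derivative d) (at 0)"
  shows "d \<le> 0"
proof (rule ccontr)
  assume "\<not> d \<le> 0"
  hence dp: "d > 0" by simp
  have d00: "(\<phi> has_real_derivative \<phi>' 0) (at 0)" using der d0 by simp
  have z: "\<phi>' 0 = 0"
  proof (rule DERIV_local_max[OF d00 d0])
    show "\<forall>y. \<bar>0 - y\<bar> < \<delta> \<longrightarrow> \<phi> y \<le> \<phi> 0" using mx by auto
  qed
  obtain e where e: "e > 0" "\<And>h. h > 0 \<Longrightarrow> h < e \<Longrightarrow> \<phi>' 0 < \<phi>' (0 + h)"
    using DERIV_pos_inc_right[OF der2 dp] by blast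
  define b where "b = min e \<delta> / 2"
  have b: "0 < b" "b < e" "b < \<delta>" using e d0 by (auto simp: b_def)
  have "\<phi> 0 < \<phi> b"
  proof (rule DERIV_pos_imp_increasing_open[of 0 b \<phi>])
    show "0 < b" by fact
  next
    fix x assume x: "0 < x" "x < b"
    show "\<exists>y. DERIV \<phi> x :> y \<and> y > 0"
      using der[of x] e(2)[of x] x b z by auto
  next
    have "\<forall>x\<in>{0..b}. isCont \<phi> x"
    proof
      fix x assume "x \<in> {0..b}"
      hence "\<bar>x\<bar> < \<delta>" using b by auto
      thus "isCont \<phi> x" using der DERIV_isCont by blast
    qed
    thus "continuous_on {0..b} \<phi>" by (simp add: continuous_at_imp_continuous_on)
  qed
  moreover have "\<phi> b \<le> \<phi> 0" using mx b by auto
  ultimately show False by simp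
qed

lemma line_deriv:
  fixes g :: "'a::real_normed_vector \<Rightarrow> real"
  assumes "g differentiable (at (a + \<tau> *\<^sub>R e))"
  shows "((\<lambda>t. g (a + t *\<^sub>R e)) has_real_derivative frechet_derivative g (at (a + \<tau> *\<^sub>R e)) e) (at \<tau>)"
proof -
  let ?D = "frechet_derivative g (at (a + \<tau> *\<^sub>R e))"
  have g: "(g has_derivative ?D) (at (a + \<tau> *\<^sub>R e))"
    using assms frechet_derivative_works by blast
  have l: "((\<lambda>t. a + t *\<^sub>R e) has_derivative (\<lambda>t. t *\<^sub>R e)) (at \<tau>)"
    by (auto intro!: derivative_eq_intros)
  have c: "((g \<circ> (\<lambda>t. a + t *\<^sub>R e)) has_derivative (?D \<circ> (\<lambda>t. t *\<^sub>R e))) (at \<tau>)"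
    by (rule diff_chain_at[OF l g])
  have lin: "linear ?D" using g has_derivative_linear by blast
  have eq: "(?D \<circ> (\<lambda>t. t *\<^sub>R e)) = (*) (?D e)"
    using linear_scale[OF lin] by (auto simp: fun_eq_iff)
  show ?thesis using c unfolding has_field_derivative_def eq by (simp add: o_def)
qed

lemma key:
  fixes u :: "real^'n::finite \<Rightarrow> real^'m::finite" and k :: 'n and i :: 'm and y :: "real^'n"
  assumes vs: "viscosity_solution p (ball 0 1) u"
  and eps: "0 < \<epsilon>" "\<epsilon> \<le> 1/8"
  and bd: "\<forall>x\<in>ball 0 1. \<bar>u x $ i\<bar> \<le> \<epsilon> powr (3/4)"
  and zero: "\<forall>x\<in>ball 0 1. x $ k < - \<epsilon> \<longrightarrow> u x = 0"
  and y: "y \<in> ball 0 (1/2)"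
  shows "\<bar>u y $ i\<bar> \<le> (20 * real CARD('n) + 8) * \<epsilon> powr (3/4) * max (y $ k + \<epsilon>) 0"
proof -
  define E where "E = \<epsilon> powr (3/4)"
  define N where "N = real CARD('n)"
  define \<beta> :: real where "\<beta> = 20"
  define \<gamma> where "\<gamma> = 20 * N"
  define \<alpha> where "\<alpha> = 20 * N + 8"
  define P where "P x = x - (x $ k) *\<^sub>R axis k (1::real)" for x :: "real^'n"
  define t where "t x = x $ k + \<epsilon>" for x :: "real^'n"
  define h where "h x = E * (\<alpha> * t x - \<gamma> * (t x)^2 + \<beta> * (norm (P x - P y))^2)" for x
  define f where "f x = u x $ i" for x
  define K where "K = cball (0::real^'n) (3/4) \<inter> {x. -\<epsilon> \<le> x $ k}"
  define w where "w x = \<bar>f x\<bar> - h x" for x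
  have E0: "E > 0" using eps by (simp add: E_def)
  have N1: "N \<ge> 1" unfolding N_def by (simp add: Suc_le_eq)
  have cont: "continuous_on (ball 0 1) u" using vs by (simp add: viscosity_solution_def)
  have C2: "C2_on (pos_set (ball 0 1) u) f" using vs unfolding viscosity_solution_def f_def[abs_def] by blast
  have lap: "\<forall>x\<in>pos_set (ball 0 1) u. laplacian f x = norm (u x) powr (p - 2) * f x"
    using vs unfolding viscosity_solution_def f_def[abs_def] by blast
  have zero': "u x = 0" if x: "x \<in> ball 0 1" "x $ k \<le> -\<epsilon>" for x
  proof (cases "x $ k < -\<epsilon>")
    case True thus ?thesis using zero x by auto
  next
    case False
    define z where "z m = x - inverse (real (Suc m)) *\<^sub>R axis k (1::real)" for m
    have zl: "z \<longlonglongrightarrow> x"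
    proof -
      have "(\<lambda>m. x - inverse (real (Suc m)) *\<^sub>R axis k (1::real)) \<longlonglongrightarrow> x - 0 *\<^sub>R axis k 1"
        by (intro tendsto_intros LIMSEQ_inverse_real_of_nat)
      thus ?thesis unfolding z_def[abs_def] by simp
    qed
    have ic: "isCont u x" using cont x continuous_on_eq_continuous_at by blast
    have l1: "(\<lambda>m. u (z m)) \<longlonglongrightarrow> u x" using isCont_tendsto_compose[OF ic zl] .
    have ev: "eventually (\<lambda>m. z m \<in> ball 0 1) sequentially"
      using topological_tendstoD[OF zl open_ball x(1)] .
    have "eventually (\<lambda>m. u (z m) = 0) sequentially"
    proof (rule eventually_mono[OF ev])
      fix m assume "z m \<in> ball 0 1"
      moreover have "z m $ k < -\<epsilon>"
      proof -
        have a: "inverse (real (Suc m)) > 0" by simp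
        have b: "z m $ k = x $ k - inverse (real (Suc m))" by (simp add: z_def)
        show ?thesis using a b x(2) by linarith
      qed
      ultimately show "u (z m) = 0" using zero by auto
    qed
    hence "(\<lambda>m. u (z m)) \<longlonglongrightarrow> 0" by (rule tendsto_eventually)
    thus ?thesis using l1 LIMSEQ_unique by blast
  qed
  have Pnorm: "(norm (P x))^2 = (norm x)^2 - (x $ k)^2" for x
  proof -
    have "(norm (P x))^2 = P x \<bullet> P x" by (simp add: power2_norm_eq_inner)
    also have "\<dots> = x \<bullet> x - (x $ k)^2"
      by (simp add: P_def inner_diff_left inner_diff_right inner_axis inner_axis' power2_eq_square)
    also have "x \<bullet> x = (norm x)^2" by (simp add: power2_norm_eq_inner)
    finally show ?thesis .
  qed
  have PyLe: "norm (P y) \<le> norm y"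
  proof -
    have "(norm (P y))^2 \<le> (norm y)^2" using Pnorm[of y] by simp
    thus ?thesis using power2_le_imp_le[of "norm (P y)" "norm y"] by simp
  qed
  have tK: "0 \<le> t x \<and> t x \<le> 1" if "x \<in> K" for x
  proof -
    have "\<bar>x $ k\<bar> \<le> norm x" by (rule component_le_norm_cart)
    thus ?thesis using that eps by (auto simp: K_def t_def)
  qed
  have poly0: "\<alpha> * t x - \<gamma> * (t x)^2 \<ge> 8 * t x" if "x \<in> K" for x
  proof -
    have "(t x)^2 \<le> t x" using tK[OF that] by (simp add: power2_eq_square mult_left_le)
    hence "\<gamma> * (t x)^2 \<le> \<gamma> * t x" using N1 by (intro mult_left_mono) (auto simp: \<gamma>_def)
    thus ?thesis unfolding \<alpha>_def by (simp add: \<gamma>_def algebra_simps)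
  qed
  have hnn: "h x \<ge> 0" if "x \<in> K" for x
    using poly0[OF that] tK[OF that] E0 unfolding h_def \<beta>_def by (intro mult_nonneg_nonneg) auto
  have hsph: "E \<le> h x" if "x \<in> K" "norm x = 3/4" for x
  proof -
    have "1 \<le> \<alpha> * t x - \<gamma> * (t x)^2 + \<beta> * (norm (P x - P y))^2"
    proof (cases "t x \<ge> 1/8")
      case True
      have "0 \<le> \<beta> * (norm (P x - P y))^2" by (simp add: \<beta>_def)
      thus ?thesis using poly0[OF that(1)] True by linarith
    next
      case False
      have x1: "x $ k < 1/8" "- (1/8) \<le> x $ k" using False tK[OF that(1)] eps unfolding t_def by linarith+
      have "(x $ k)^2 \<le> (1/8)^2"
        using x1 by (intro power2_le_iff_abs_le[THEN iffD2]) auto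
      moreover have "(norm (P x))^2 = (3/4)^2 - (x $ k)^2" using Pnorm[of x] that(2) by simp
      ultimately have "(73/100)^2 \<le> (norm (P x))^2" by (simp add: power2_eq_square)
      hence a: "norm (P x) \<ge> 73/100" using power2_le_imp_le[of "73/100" "norm (P x)"] by simp
      have b: "norm (P y) < 1/2" using PyLe y by simp
      have "norm (P x) - norm (P y) \<le> norm (P x - P y)" by (rule norm_triangle_ineq2)
      hence c: "norm (P x - P y) \<ge> 23/100" using a b by linarith
      hence sq: "(norm (P x - P y))^2 \<ge> (23/100)^2" by (intro power_mono) auto
      have "\<beta> * (norm (P x - P y))^2 \<ge> 1"
        unfolding \<beta>_def power2_eq_square using sq[unfolded power2_eq_square] by linarith
      moreover have "\<alpha> * t x - \<gamma> * (t x)^2 \<ge> 0" using poly0[OF that(1)] tK[OF that(1)] by linarith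
      ultimately show ?thesis by linarith
    qed
    hence "E * 1 \<le> h x" unfolding h_def using E0 by (intro mult_left_mono) auto
    thus ?thesis by simp
  qed
  have Ksub: "K \<subseteq> ball 0 1" by (auto simp: K_def)
  have Kc: "compact K" unfolding K_def
    by (intro compact_Int_closed compact_cball closed_halfspace_component_ge_cart)
  have fc: "continuous_on K f"
    unfolding f_def[abs_def] using continuous_on_subset[OF cont Ksub]
    by (intro continuous_intros) auto
  have wc: "continuous_on K w"
    unfolding w_def[abs_def] h_def[abs_def] t_def[abs_def] P_def[abs_def]
    by (intro continuous_intros fc)
  have C1f: "f differentiable (at x)" if "x \<in> pos_set (ball 0 1) u" for x
    using C2 that unfolding C2_on_def C1_on_def by blast
  have C1f2: "pderiv j f differentiable (at x)" if "x \<in> pos_set (ball 0 1) u" for x j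
    using C2 that unfolding C2_on_def C1_on_def by blast
  have pos_open: "open (pos_set (ball 0 1) u)"
  proof -
    have "pos_set (ball 0 1) u = ball 0 1 \<inter> u -` (- {0})" by (auto simp: pos_set_def)
    thus ?thesis using continuous_open_preimage[OF cont open_ball, of "- {0}"] by auto
  qed
  show ?thesis
  proof (cases "y $ k < -\<epsilon>")
    case True
    hence "u y = 0" using zero y by auto
    thus ?thesis using E0 unfolding E_def[symmetric] N_def[symmetric] using N1 by simp
  next
    case False
    have yK: "y \<in> K" using False y by (auto simp: K_def)
    obtain x0 where x0: "x0 \<in> K" "\<forall>x\<in>K. w x \<le> w x0"
      using continuous_attains_sup[OF Kc _ wc] yK by blast
    have w0: "w x0 \<le> 0"
    proof (rule ccontr)
      assume "\<not> w x0 \<le> 0"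
      hence wp: "w x0 > 0" by simp
      have fx0: "f x0 \<noteq> 0" using wp hnn[OF x0(1)] by (auto simp: w_def)
      have nx0: "norm x0 \<noteq> 3/4"
      proof
        assume "norm x0 = 3/4"
        hence "E \<le> h x0" using hsph x0(1) by blast
        moreover have "\<bar>f x0\<bar> \<le> E" using bd x0(1) Ksub by (auto simp: f_def E_def)
        ultimately show False using wp by (simp add: w_def)
      qed
      have kx0: "x0 $ k > -\<epsilon>"
      proof (rule ccontr)
        assume "\<not> x0 $ k > -\<epsilon>"
        hence "u x0 = 0" using zero' x0(1) Ksub by auto
        thus False using fx0 by (simp add: f_def)
      qed
      have px0: "x0 \<in> pos_set (ball 0 1) u"
      proof -
        have "\<bar>f x0\<bar> \<le> norm (u x0)" unfolding f_def by (rule component_le_norm_cart)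
        thus ?thesis using fx0 x0(1) Ksub by (auto simp: pos_set_def)
      qed
      define Oset where "Oset = ball 0 (3/4) \<inter> {x. x $ k > -\<epsilon>} \<inter> pos_set (ball 0 1) u"
      have Oo: "open Oset" unfolding Oset_def
        by (intro open_Int open_ball open_halfspace_component_gt_cart pos_open)
      have xO: "x0 \<in> Oset" using x0(1) nx0 kx0 px0 by (auto simp: Oset_def K_def)
      obtain \<delta> where d0: "\<delta> > 0" and dO: "ball x0 \<delta> \<subseteq> Oset"
        using Oo xO open_contains_ball by blast
      have OK: "Oset \<subseteq> K" by (auto simp: Oset_def K_def)
      have Opos: "Oset \<subseteq> pos_set (ball 0 1) u" by (auto simp: Oset_def)
      define s where "s = sgn (f x0)"
      have s1: "s * f x0 = \<bar>f x0\<bar>" by (simp add: s_def sgn_mult_abs abs_sgn)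
      have s2: "s * f x \<le> \<bar>f x\<bar>" for x
        using fx0 by (cases "f x0 > 0") (auto simp: s_def)
      have bj: "s * pderiv j (pderiv j f) x0 \<le> E * (2 * \<beta> - (if j = k then 2 * \<gamma> + 2 * \<beta> else 0))" for j
      proof -
        define e where "e = axis j (1::real)"
        define v where "v = P x0 - P y"
        define t0 where "t0 = t x0"
        define ek where "ek = e $ k"
        define Pe where "Pe = P e"
        define hl where "hl \<tau> = E * (\<alpha> * (t0 + \<tau> * ek) - \<gamma> * (t0 + \<tau> * ek)^2
            + \<beta> * ((norm v)^2 + 2 * \<tau> * (v \<bullet> Pe) + \<tau>^2 * (norm Pe)^2))" for \<tau>
        define hl' where "hl' \<tau> = E * (\<alpha> * ek - 2 * \<gamma> * (t0 + \<tau> * ek) * ek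
            + \<beta> * (2 * (v \<bullet> Pe) + 2 * \<tau> * (norm Pe)^2))" for \<tau>
        have hl: "h (x0 + \<tau> *\<^sub>R e) = hl \<tau>" for \<tau>
        proof -
          have a: "t (x0 + \<tau> *\<^sub>R e) = t0 + \<tau> * ek" by (simp add: t_def t0_def ek_def)
          have b: "P (x0 + \<tau> *\<^sub>R e) - P y = v + \<tau> *\<^sub>R Pe"
            by (simp add: P_def v_def Pe_def algebra_simps)
          have c: "(norm (v + \<tau> *\<^sub>R Pe))^2 = (norm v)^2 + 2 * \<tau> * (v \<bullet> Pe) + \<tau>^2 * (norm Pe)^2"
          proof -
            have "(norm (v + \<tau> *\<^sub>R Pe))^2 = (v + \<tau> *\<^sub>R Pe) \<bullet> (v + \<tau> *\<^sub>R Pe)"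
              by (simp add: power2_norm_eq_inner)
            also have "\<dots> = v \<bullet> v + 2 * \<tau> * (v \<bullet> Pe) + \<tau>^2 * (Pe \<bullet> Pe)"
              by (simp add: inner_add_left inner_add_right inner_commute power2_eq_square algebra_simps)
            finally show ?thesis by (simp add: power2_norm_eq_inner)
          qed
          show ?thesis unfolding h_def hl_def a b c ..
        qed
        have hld: "(hl has_real_derivative hl' \<tau>) (at \<tau>)" for \<tau>
          unfolding hl_def hl'_def
          by (rule derivative_eq_intros refl | simp add: algebra_simps)+
        have hld2: "(hl' has_real_derivative E * (- 2 * \<gamma> * ek * ek + \<beta> * (2 * (norm Pe)^2))) (at 0)"
          unfolding hl'_def
          by (rule derivative_eq_intros refl | simp add: algebra_simps)+
        define \<phi> where "\<phi> \<tau> = s * f (x0 + \<tau> *\<^sub>R e) - hl \<tau>" for \<tau>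
        define \<phi>' where "\<phi>' \<tau> = s * pderiv j f (x0 + \<tau> *\<^sub>R e) - hl' \<tau>" for \<tau>
        have inO: "x0 + \<tau> *\<^sub>R e \<in> Oset" if "\<bar>\<tau>\<bar> < \<delta>" for \<tau>
        proof -
          have "dist x0 (x0 + \<tau> *\<^sub>R e) = \<bar>\<tau>\<bar>" by (simp add: dist_norm e_def)
          thus ?thesis using that dO by auto
        qed
        have "s * pderiv j (pderiv j f) x0 - E * (- 2 * \<gamma> * ek * ek + \<beta> * (2 * (norm Pe)^2)) \<le> 0"
        proof (rule max_2nd[of \<delta> \<phi> \<phi>'])
          show "0 < \<delta>" by fact
        next
          fix \<tau> :: real assume "\<bar>\<tau>\<bar> < \<delta>"
          hence "x0 + \<tau> *\<^sub>R e \<in> K" using inO OK by auto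
          hence "w (x0 + \<tau> *\<^sub>R e) \<le> w x0" using x0(2) by auto
          moreover have "hl 0 = h x0" using hl[of 0] by simp
          ultimately show "\<phi> \<tau> \<le> \<phi> 0"
            using s1 s2[of "x0 + \<tau> *\<^sub>R e"] hl[of \<tau>] by (simp add: \<phi>_def w_def)
        next
          fix \<tau> :: real assume "\<bar>\<tau>\<bar> < \<delta>"
          hence "x0 + \<tau> *\<^sub>R e \<in> pos_set (ball 0 1) u" using inO Opos by auto
          hence "((\<lambda>t. f (x0 + t *\<^sub>R e)) has_real_derivative pderiv j f (x0 + \<tau> *\<^sub>R e)) (at \<tau>)"
            using line_deriv[OF C1f] unfolding pderiv_def e_def by blast
          thus "(\<phi> has_real_derivative \<phi>' \<tau>) (at \<tau>)"
            unfolding \<phi>_def[abs_def] \<phi>'_def by (intro DERIV_diff DERIV_cmult hld)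
        next
          have "((\<lambda>t. pderiv j f (x0 + t *\<^sub>R e)) has_real_derivative pderiv j (pderiv j f) x0) (at 0)"
            using line_deriv[of "pderiv j f" x0 0 e] C1f2[OF px0] unfolding pderiv_def[of j "pderiv j f"] e_def
            by simp
          thus "(\<phi>' has_real_derivative s * pderiv j (pderiv j f) x0 - E * (- 2 * \<gamma> * ek * ek + \<beta> * (2 * (norm Pe)^2))) (at 0)"
            unfolding \<phi>'_def[abs_def] by (intro DERIV_diff DERIV_cmult hld2)
        qed
        moreover have "j = k \<Longrightarrow> ek = 1 \<and> Pe = 0"
          by (simp add: ek_def Pe_def e_def P_def)
        moreover have "j \<noteq> k \<Longrightarrow> ek = 0 \<and> norm Pe = 1"
        proof -
          assume jk: "j \<noteq> k"
          hence "ek = 0" by (simp add: ek_def e_def axis_def)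
          moreover hence "Pe = e" by (simp add: Pe_def P_def ek_def)
          ultimately show ?thesis by (simp add: e_def)
        qed
        ultimately show ?thesis by (cases "j = k") (auto simp: algebra_simps)
      qed
      have "s * laplacian f x0 = (\<Sum>j\<in>UNIV. s * pderiv j (pderiv j f) x0)"
        by (simp add: laplacian_def sum_distrib_left)
      also have "\<dots> \<le> (\<Sum>j\<in>UNIV. E * (2 * \<beta> - (if j = k then 2 * \<gamma> + 2 * \<beta> else 0)))"
        by (rule sum_mono) (rule bj)
      also have "\<dots> = E * (2 * \<beta> * N - (2 * \<gamma> + 2 * \<beta>))"
        by (simp add: sum_distrib_left[symmetric] sum_subtractf N_def)
      also have "\<dots> < 0" using E0 by (simp add: \<gamma>_def \<beta>_def algebra_simps)
      finally have neg: "s * laplacian f x0 < 0" .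
      have "s * laplacian f x0 = norm (u x0) powr (p - 2) * \<bar>f x0\<bar>"
        using lap px0 s1 by (simp add: algebra_simps)
      moreover have "norm (u x0) powr (p - 2) * \<bar>f x0\<bar> > 0"
        using fx0 px0 by (simp add: pos_set_def)
      ultimately show False using neg by simp
    qed
    have "\<bar>f y\<bar> \<le> h y" using x0(2) yK w0 by (force simp: w_def)
    also have "h y = E * (\<alpha> * t y - \<gamma> * (t y)^2)" by (simp add: h_def)
    also have "\<dots> \<le> E * (\<alpha> * t y)"
      using E0 N1 by (intro mult_left_mono) (auto simp: \<gamma>_def)
    also have "\<dots> = (20 * real CARD('n) + 8) * \<epsilon> powr (3/4) * max (y $ k + \<epsilon>) 0"
      using False by (simp add: E_def \<alpha>_def N_def t_def)
    finally show ?thesis by (simp add: f_def)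
  qed
qed

theorem lemma4p3:
  fixes p :: real
  assumes "CARD('n::finite) \<ge> 2" and "0 < p" and "p < 1"
  shows "\<exists>C>0. \<exists>\<epsilon>0>0. \<forall>(k::'n) (i1::'m::finite) (\<epsilon>::real) (u :: real^'n \<Rightarrow> real^'m).
    (viscosity_solution p (ball 0 1) u \<and> 0 < \<epsilon> \<and> \<epsilon> \<le> \<epsilon>0 \<and>
     (\<forall>x\<in>ball 0 1. \<forall>i. i \<noteq> i1 \<longrightarrow> \<bar>u x $ i\<bar> \<le> \<epsilon> powr (3/4)) \<and>
     (\<forall>x\<in>ball 0 1. x $ k < - \<epsilon> \<longrightarrow> u x = 0))
    \<longrightarrow> (\<forall>x\<in>ball 0 (1/2). \<forall>i. i \<noteq> i1 \<longrightarrow>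
           \<bar>u x $ i\<bar> \<le> C * \<epsilon> powr (3/4) * max (x $ k + \<epsilon>) 0)"
  apply (rule exI[of _ "20 * real CARD('n) + 8"])
  apply (rule conjI, simp)
  apply (rule exI[of _ "1/8::real"])
  apply (rule conjI, simp)
proof (intro allI impI ballI)
  fix k :: 'n and i1 :: 'm and \<epsilon> :: real and u :: "real^'n \<Rightarrow> real^'m" and x :: "real^'n" and i :: 'm
  assume H: "viscosity_solution p (ball 0 1) u \<and> 0 < \<epsilon> \<and> \<epsilon> \<le> 1/8 \<and>
     (\<forall>x\<in>ball 0 1. \<forall>i. i \<noteq> i1 \<longrightarrow> \<bar>u x $ i\<bar> \<le> \<epsilon> powr (3/4)) \<and>
     (\<forall>x\<in>ball 0 1. x $ k < - \<epsilon> \<longrightarrow> u x = 0)"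
    and x: "x \<in> ball 0 (1/2)" and i: "i \<noteq> i1"
  show "\<bar>u x $ i\<bar> \<le> (20 * real CARD('n) + 8) * \<epsilon> powr (3/4) * max (x $ k + \<epsilon>) 0"
    using key[of p u \<epsilon> i k x] H x i by blast
qed

end
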